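(* Let $\{G^k\}_{k\ge0}$ be a $B$-strongly connected sequence of digraphs on $V=\{1,\dots,I\}$ and let each $\mathbf{A}^k=(a_{ij}^k)$ be compliant with $G^k$ and column stochastic (constant $\kappa>0$). For arbitrary perturbations $\boldsymbol\varepsilon_i^k\in\mathbb{R}^m$ and initial $\mathbf{x}^0=(\mathbf{x}_{(i)}^0)_{i=1}^I$, consider the perturbed condensed push-sum protocol: $\phi_{(i)}^0=1$ and, for all $i$ and $k\ge0$, $$\phi_{(i)}^{k+1}=\sum_{j=1}^Ia_{ij}^k\phi_{(j)}^k,\qquad \mathbf{x}_{(i)}^{k+1}=\frac{1}{\phi_{(i)}^{k+1}}\sum_{j=1}^Ia_{ij}^k\phi_{(j)}^k\mathbf{x}_{(j)}^k+\boldsymbol\varepsilon_i^k.$$ Then: (a) $\phi_{lb}\triangleq\inf_k\min_i\phi_{(i)}^k\ge\kappa^{2(I-1)B}$ and $\phi_{ub}\triangleq\sup_k\max_i\phi_{(i)}^k\le I-\kappa^{2(I-1)B}$; (b) for all $k\ge0$ and $i=1,\dots,I$, $$\Big\|\mathbf{x}_{(i)}^k-\frac1I\sum_{j=1}^I\phi_{(j)}^k\mathbf{x}_{(j)}^k\Big\|\le c\Big(\rho^k\|\mathbf{x}^0\|+\sum_{t=0}^{k-1}\rho^{k-1-t}\|\boldsymbol\varepsilon^t\|\Big),$$ where $\boldsymbol\varepsilon^t=(\boldsymbol\varepsilon_i^t)_{i=1}^I$, $\tilde\kappa\triangleq\kappa\,\phi_{lb}/\phi_{ub}$, $\rho\triangleq(1-\tilde\kappa^{(I-1)B})^{1/((I-1)B)}\in(0,1)$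 and $c\triangleq\frac{2I}{\rho}\cdot\frac{2(1+\tilde\kappa^{-(I-1)B})}{1-\tilde\kappa^{(I-1)B}}$.
   Context: A digraph at time $k$ is $G^k=(V,E^k)$ with edge $(j,i)\in E^k$ meaning $j$ can send to $i$. The sequence is $B$-strongly connected if there is an integer $B>0$ such that for every $k\ge0$ the digraph with edge set $\bigcup_{t=k}^{k+B-1}E^t$ is strongly connected. $\mathbf{A}^k$ is compliant with $G^k$ (constant $\kappa>0$) if $a_{ij}^k=0$ whenever $j\ne i$ and $(j,i)\notin E^k$, $a_{ij}^k\ge\kappa$ whenever $(j,i)\in E^k$, and $a_{ii}^k\ge\kappa$ for all $i$; it is column stochastic if $\mathbf{1}^T\mathbf{A}^k=\mathbf{1}^T$ (nonnegative entries). $\|\mathbf{x}^0\|$ is the Euclidean norm of the stacked vector. *)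

theory Defs
  imports "HOL-Analysis.Analysis"
begin

text \<open>Vertices are V = {0..<I} (the paper's {1..I}, shifted). An edge (j,i) in E k means
  j can send to i at time k.\<close>

definition strongly_connected_on :: "nat \<Rightarrow> (nat \<times> nat) set \<Rightarrow> bool" where
  "strongly_connected_on I E \<longleftrightarrow>
     (\<forall>u<I. \<forall>v<I. (u, v) \<in> (E \<inter> ({..<I} \<times> {..<I}))\<^sup>*)"

definition B_strongly_connected :: "nat \<Rightarrow> nat \<Rightarrow> (nat \<Rightarrow> (nat \<times> nat) set) \<Rightarrow> bool" where
  "B_strongly_connected I B E \<longleftrightarrow> B > 0 \<and>
     (\<forall>k. strongly_connected_on I (\<Union>t\<in>{k..k+B-1}. E t))"

text \<open>A k i j is the entry a_{ij}^k.\<close>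
definition compliant :: "nat \<Rightarrow> real \<Rightarrow> (nat \<times> nat) set \<Rightarrow> (nat \<Rightarrow> nat \<Rightarrow> real) \<Rightarrow> bool" where
  "compliant I \<kappa> E A \<longleftrightarrow>
     (\<forall>i<I. \<forall>j<I. j \<noteq> i \<and> (j, i) \<notin> E \<longrightarrow> A i j = 0) \<and>
     (\<forall>i<I. \<forall>j<I. (j, i) \<in> E \<longrightarrow> A i j \<ge> \<kappa>) \<and>
     (\<forall>i<I. A i i \<ge> \<kappa>)"

definition column_stochastic :: "nat \<Rightarrow> (nat \<Rightarrow> nat \<Rightarrow> real) \<Rightarrow> bool" where
  "column_stochastic I A \<longleftrightarrow>
     (\<forall>i<I. \<forall>j<I. A i j \<ge> 0) \<and> (\<forall>j<I. (\<Sum>i<I. A i j) = 1)"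

definition stacked_norm :: "nat \<Rightarrow> (nat \<Rightarrow> 'v::real_normed_vector) \<Rightarrow> real" where
  "stacked_norm I z = sqrt (\<Sum>i<I. (norm (z i))\<^sup>2)"

end

theory Submission
  imports Defs
begin


lemma cut_edge:
  assumes "(u, w) \<in> R\<^sup>*" "u \<in> S" "w \<notin> S"
  shows "\<exists>a b. (a,b) \<in> R \<and> a \<in> S \<and> b \<notin> S"
  using assms by (induction rule: rtrancl_induct) auto

lemma spread:
  fixes M :: "nat \<Rightarrow> nat \<Rightarrow> nat \<Rightarrow> real" and v :: "nat \<Rightarrow> nat \<Rightarrow> real"
  assumes Bc: "B_strongly_connected I B E"
    and d0: "0 \<le> \<delta>"
    and Mnn: "\<And>d i j. i<I \<Longrightarrow> j<I \<Longrightarrow> 0 \<le> M d i j"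
    and Mdiag: "\<And>d i. i<I \<Longrightarrow> \<delta> \<le> M d i i"
    and Medge: "\<And>d i j. i<I \<Longrightarrow> j<I \<Longrightarrow> (j,i) \<in> E (r+d) \<Longrightarrow> \<delta> \<le> M d i j"
    and vS: "\<And>d i. i<I \<Longrightarrow> v (Suc d) i = (\<Sum>l<I. M d i l * v d l)"
    and v0: "\<And>i. i<I \<Longrightarrow> 0 \<le> v 0 i" and jz: "jz < I" "1 \<le> v 0 jz"
    and iI: "i < I"
  shows "\<delta>^((I-1)*B) \<le> v ((I-1)*B) i"
proof -
  have vnn': "\<forall>i<I. 0 \<le> v d i" for d
    by (induction d) (auto simp: vS v0 intro!: sum_nonneg mult_nonneg_nonneg Mnn)
  hence vnn: "\<And>d i. i<I \<Longrightarrow> 0 \<le> v d i" by blast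
  define S where "S d = {i. i<I \<and> \<delta>^d \<le> v d i}" for d
  have single: "M d i l * v d l \<le> v (Suc d) i" if "i<I" "l<I" for d i l
  proof -
    have "M d i l * v d l \<le> (\<Sum>l<I. M d i l * v d l)"
      by (rule member_le_sum) (use that in \<open>auto intro!: mult_nonneg_nonneg Mnn vnn\<close>)
    thus ?thesis using vS[OF that(1)] by simp
  qed
  have step2: "\<delta>^(Suc d) \<le> v (Suc d) i" if "i<I" "l<I" "\<delta> \<le> M d i l" "\<delta>^d \<le> v d l" for d i l
  proof -
    have "\<delta>^(Suc d) = \<delta> * \<delta>^d" by simp
    also have "\<dots> \<le> M d i l * v d l"
      by (rule mult_mono) (use that d0 in auto)
    also have "\<dots> \<le> v (Suc d) i" by (rule single) (use that in auto)
    finally show ?thesis .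
  qed
  have Sstep: "S d \<subseteq> S (Suc d)" for d
    unfolding S_def using step2 Mdiag by auto
  have Smono: "d \<le> d' \<Longrightarrow> S d \<subseteq> S d'" for d d'
    by (rule lift_Suc_mono_le[of S]) (use Sstep in auto)
  have Ssub: "S d \<subseteq> {..<I}" for d unfolding S_def by auto
  have fin: "finite (S d)" for d using Ssub finite_subset by blast
  have jzS: "jz \<in> S d" for d
    using Smono[of 0 d] jz unfolding S_def by auto
  have Bpos: "B > 0" using Bc unfolding B_strongly_connected_def by auto
  have grow: "card (S d) < card (S (d+B))" if ne: "S d \<noteq> {..<I}" for d
  proof -
    obtain w where w: "w < I" "w \<notin> S d" using ne Ssub by blast
    let ?U = "(\<Union>t\<in>{r+d..r+d+B-1}. E t)"
    have "strongly_connected_on I ?U" using Bc unfolding B_strongly_connected_def by auto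
    hence "(jz, w) \<in> (?U \<inter> ({..<I} \<times> {..<I}))\<^sup>*"
      unfolding strongly_connected_on_def using jz w by auto
    from cut_edge[OF this jzS[of d] w(2)]
    obtain a b where ab: "(a,b) \<in> ?U" "a<I" "b<I" "a \<in> S d" "b \<notin> S d" by auto
    then obtain t where t: "t \<in> {r+d..r+d+B-1}" "(a,b) \<in> E t" by auto
    define q where "q = t - (r+d)"
    have tq: "t = r + (d+q)" "q < B" using t Bpos unfolding q_def by auto
    have "a \<in> S (d+q)" using Smono[of d "d+q"] ab by auto
    hence "\<delta>^(Suc (d+q)) \<le> v (Suc (d+q)) b"
      using step2[of b a "d+q"] Medge[of b a "d+q"] ab t tq unfolding S_def by auto
    hence "b \<in> S (Suc (d+q))" unfolding S_def using ab by auto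
    hence "b \<in> S (d+B)" using Smono[of "Suc (d+q)" "d+B"] tq by auto
    hence "insert b (S d) \<subseteq> S (d+B)" using Smono[of d "d+B"] by auto
    hence "card (insert b (S d)) \<le> card (S (d+B))" using fin card_mono by blast
    thus ?thesis using ab fin by simp
  qed
  have cg: "min I (q+1) \<le> card (S (q*B))" for q
  proof (induction q)
    case 0
    have "card (S 0) > 0" using jzS[of 0] fin card_gt_0_iff by blast
    thus ?case by simp
  next
    case (Suc q)
    have eq: "Suc q * B = q*B + B" by simp
    show ?case
    proof (cases "S (q*B) = {..<I}")
      case True
      hence "{..<I} \<subseteq> S (Suc q * B)" using Smono[of "q*B" "Suc q * B"] by auto
      hence "S (Suc q * B) = {..<I}" using Ssub by blast
      thus ?thesis by simp
    next
      case False
      from grow[OF False] Suc show ?thesis unfolding eq by linarith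
    qed
  qed
  have "I \<le> card (S ((I-1)*B))" using cg[of "I-1"] iI by simp
  hence "S ((I-1)*B) = {..<I}" using Ssub[of "(I-1)*B"]
    by (metis card_lessThan card_mono finite_lessThan le_antisym card_subset_eq)
  thus ?thesis using iI unfolding S_def by auto
qed

lemma contract:
  fixes p :: "nat \<Rightarrow> nat \<Rightarrow> real" and y :: "nat \<Rightarrow> 'a::real_normed_vector"
  assumes pge: "\<And>i j. i<I \<Longrightarrow> j<I \<Longrightarrow> \<delta> \<le> p i j"
    and rows: "\<And>i. i<I \<Longrightarrow> (\<Sum>j<I. p i j) = 1"
    and Dy: "\<And>j k. j<I \<Longrightarrow> k<I \<Longrightarrow> norm (y j - y k) \<le> D"
    and i: "i<I" and l: "l<I"
  shows "norm ((\<Sum>j<I. p i j *\<^sub>R y j) - (\<Sum>j<I. p l j *\<^sub>R y j)) \<le> (1 - real I * \<delta>) * D"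
proof -
  define q where "q a j = p a j - \<delta>" for a j
  define T where "T = 1 - real I * \<delta>"
  have qnn: "a<I \<Longrightarrow> j<I \<Longrightarrow> 0 \<le> q a j" for a j using pge unfolding q_def by auto
  have qsum: "a<I \<Longrightarrow> (\<Sum>j<I. q a j) = T" for a
    using rows unfolding q_def T_def by (simp add: sum_subtractf)
  have split: "a<I \<Longrightarrow> (\<Sum>j<I. p a j *\<^sub>R y j) = \<delta> *\<^sub>R (\<Sum>j<I. y j) + (\<Sum>j<I. q a j *\<^sub>R y j)" for a
    unfolding q_def by (simp add: scaleR_diff_left sum_subtractf scaleR_sum_right)
  define X where "X = (\<Sum>j<I. q i j *\<^sub>R y j) - (\<Sum>k<I. q l k *\<^sub>R y k)"
  have Xeq: "(\<Sum>j<I. p i j *\<^sub>R y j) - (\<Sum>j<I. p l j *\<^sub>R y j) = X"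
    unfolding X_def using split[OF i] split[OF l] by simp
  have TX: "T *\<^sub>R X = (\<Sum>j<I. \<Sum>k<I. (q i j * q l k) *\<^sub>R (y j - y k))"
  proof -
    have "(\<Sum>j<I. \<Sum>k<I. (q i j * q l k) *\<^sub>R (y j - y k))
        = (\<Sum>j<I. \<Sum>k<I. (q i j * q l k) *\<^sub>R y j) - (\<Sum>j<I. \<Sum>k<I. (q i j * q l k) *\<^sub>R y k)"
      by (simp add: scaleR_diff_right sum_subtractf)
    also have "(\<Sum>j<I. \<Sum>k<I. (q i j * q l k) *\<^sub>R y j) = (\<Sum>j<I. (q i j * T) *\<^sub>R y j)"
      using qsum[OF l] by (simp add: scaleR_sum_left[symmetric] sum_distrib_left[symmetric])
    also have "(\<Sum>j<I. \<Sum>k<I. (q i j * q l k) *\<^sub>R y k) = (\<Sum>k<I. \<Sum>j<I. (q i j * q l k) *\<^sub>R y k)"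
      by (rule sum.swap)
    also have "\<dots> = (\<Sum>k<I. (T * q l k) *\<^sub>R y k)"
      using qsum[OF i] by (simp add: scaleR_sum_left[symmetric] sum_distrib_right[symmetric])
    finally show ?thesis unfolding X_def
      by (simp add: scaleR_diff_right scaleR_sum_right mult.commute)
  qed
  have Tnn: "0 \<le> T" using qsum[OF i] qnn[OF i] by (metis sum_nonneg lessThan_iff)
  have "T * norm X = norm (T *\<^sub>R X)" using Tnn by simp
  also have "\<dots> \<le> (\<Sum>j<I. \<Sum>k<I. norm ((q i j * q l k) *\<^sub>R (y j - y k)))"
    unfolding TX by (rule order.trans[OF norm_sum sum_mono]) (rule norm_sum)
  also have "\<dots> \<le> (\<Sum>j<I. \<Sum>k<I. (q i j * q l k) * D)"
    by (intro sum_mono) (use qnn i l Dy in \<open>auto intro!: mult_left_mono mult_nonneg_nonneg\<close>)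
  also have "\<dots> = T * T * D"
    using qsum[OF i] qsum[OF l]
    by (simp add: sum_distrib_right[symmetric] sum_distrib_left[symmetric] mult.assoc)
  finally have TT: "T * norm X \<le> T * (T * D)" by (simp add: mult.assoc)
  show ?thesis
  proof (cases "T = 0")
    case True
    have "\<forall>j\<in>{..<I}. q i j = 0"
      using qsum[OF i] qnn[OF i] True sum_nonneg_eq_0_iff[of "{..<I}" "q i"] by auto
    moreover have "\<forall>j\<in>{..<I}. q l j = 0"
      using qsum[OF l] qnn[OF l] True sum_nonneg_eq_0_iff[of "{..<I}" "q l"] by auto
    ultimately have "X = 0" unfolding X_def by simp
    thus ?thesis using Xeq True T_def by simp
  next
    case False
    hence "norm X \<le> T * D" using TT Tnn by (simp add: mult_le_cancel_left)
    thus ?thesis using Xeq T_def by simp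
  qed
qed



fun evW :: "nat \<Rightarrow> (nat \<Rightarrow> nat \<Rightarrow> nat \<Rightarrow> real) \<Rightarrow> nat \<Rightarrow> (nat \<Rightarrow> 'a::real_vector) \<Rightarrow> nat \<Rightarrow> nat \<Rightarrow> 'a" where
  "evW I W s w 0 = w"
| "evW I W s w (Suc d) = (\<lambda>i. \<Sum>l<I. W (s+d) i l *\<^sub>R evW I W s w d l)"

lemma evW_comp: "evW I W s w (n + d) = evW I W (s+n) (evW I W s w n) d"
  by (induction d) (simp_all add: add.assoc)

definition ej :: "nat \<Rightarrow> nat \<Rightarrow> real" where "ej j = (\<lambda>l. if l = j then 1 else 0)"

lemma evW_lin: "i<I \<Longrightarrow> evW I W s w d i = (\<Sum>j<I. evW I W s (ej j) d i *\<^sub>R w j)"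
proof (induction d arbitrary: i)
  case 0
  have "(\<Sum>j<I. ej j i *\<^sub>R w j) = (\<Sum>j\<in>{i}. ej j i *\<^sub>R w j)"
    by (rule sum.mono_neutral_right) (use 0 in \<open>auto simp: ej_def\<close>)
  thus ?case by (simp add: ej_def)
next
  case (Suc d)
  have "evW I W s w (Suc d) i = (\<Sum>l<I. W (s+d) i l *\<^sub>R (\<Sum>j<I. evW I W s (ej j) d l *\<^sub>R w j))"
    using Suc.IH by simp
  also have "\<dots> = (\<Sum>l<I. \<Sum>j<I. (W (s+d) i l * evW I W s (ej j) d l) *\<^sub>R w j)"
    by (simp add: scaleR_sum_right)
  also have "\<dots> = (\<Sum>j<I. \<Sum>l<I. (W (s+d) i l * evW I W s (ej j) d l) *\<^sub>R w j)"
    by (rule sum.swap)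
  also have "\<dots> = (\<Sum>j<I. evW I W s (ej j) (Suc d) i *\<^sub>R w j)"
    by (simp add: scaleR_sum_left)
  finally show ?case .
qed

context
  fixes I B :: nat and E :: "nat \<Rightarrow> (nat \<times> nat) set" and W :: "nat \<Rightarrow> nat \<Rightarrow> nat \<Rightarrow> real" and \<delta> :: real
  assumes I2: "I \<ge> 2"
    and Bc: "B_strongly_connected I B E"
    and d0: "0 \<le> \<delta>"
    and Wnn: "\<And>k i j. i<I \<Longrightarrow> j<I \<Longrightarrow> 0 \<le> W k i j"
    and Wrow: "\<And>k i. i<I \<Longrightarrow> (\<Sum>j<I. W k i j) = 1"
    and Wdiag: "\<And>k i. i<I \<Longrightarrow> \<delta> \<le> W k i i"
    and Wedge: "\<And>k i j. i<I \<Longrightarrow> j<I \<Longrightarrow> (j,i) \<in> E k \<Longrightarrow> \<delta> \<le> W k i j"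
begin

lemma ev_nn: "i<I \<Longrightarrow> j<I \<Longrightarrow> 0 \<le> evW I W s (ej j) d i"
proof (induction d arbitrary: i)
  case 0 thus ?case by (simp add: ej_def)
next
  case (Suc d) thus ?case by (auto intro!: sum_nonneg mult_nonneg_nonneg Wnn)
qed

lemma ev_rows: "i<I \<Longrightarrow> (\<Sum>j<I. evW I W s (ej j) d i) = 1"
proof (induction d arbitrary: i)
  case 0
  have "(\<Sum>j<I. ej j i) = (\<Sum>j\<in>{i}. ej j i)"
    by (rule sum.mono_neutral_right) (use 0 in \<open>auto simp: ej_def\<close>)
  thus ?case by (simp add: ej_def)
next
  case (Suc d)
  have "(\<Sum>j<I. evW I W s (ej j) (Suc d) i) = (\<Sum>j<I. \<Sum>l<I. W (s+d) i l * evW I W s (ej j) d l)"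
    by simp
  also have "\<dots> = (\<Sum>l<I. \<Sum>j<I. W (s+d) i l * evW I W s (ej j) d l)" by (rule sum.swap)
  also have "\<dots> = (\<Sum>l<I. W (s+d) i l)"
    by (simp add: sum_distrib_left[symmetric] Suc.IH)
  also have "\<dots> = 1" using Wrow Suc.prems by simp
  finally show ?case .
qed

lemma ev_pos: "i<I \<Longrightarrow> j<I \<Longrightarrow> \<delta>^((I-1)*B) \<le> evW I W s (ej j) ((I-1)*B) i"
  by (rule spread[where E=E and M="\<lambda>d. W (s+d)" and r=s and jz=j, OF Bc d0])
     (auto simp: Wnn Wdiag Wedge ej_def)

lemma ev_mono:
  assumes "\<And>j k. j<I \<Longrightarrow> k<I \<Longrightarrow> norm (w j - w k) \<le> D"
  shows "j<I \<Longrightarrow> k<I \<Longrightarrow> norm (evW I W s w d j - evW I W s w d k) \<le> (D::real)"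
proof (induction d arbitrary: j k)
  case 0 thus ?case using assms by simp
next
  case (Suc d)
  have "norm ((\<Sum>l<I. W (s+d) j l *\<^sub>R evW I W s w d l) - (\<Sum>l<I. W (s+d) k l *\<^sub>R evW I W s w d l))
      \<le> (1 - real I * 0) * D"
    by (rule contract) (use Suc Wnn Wrow in auto)
  thus ?case by simp
qed

lemma delta_le1: "\<delta> \<le> 1"
proof -
  have "W 0 0 0 \<le> (\<Sum>j<I. W 0 0 j)"
    by (rule member_le_sum) (use I2 Wnn in auto)
  thus ?thesis using Wdiag[of 0 0] Wrow[of 0 0] I2 by simp
qed

lemma ev_contract:
  fixes w :: "nat \<Rightarrow> 'a::real_normed_vector"
  assumes "\<And>j k. j<I \<Longrightarrow> k<I \<Longrightarrow> norm (w j - w k) \<le> D" "0 \<le> D"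
  shows "j<I \<Longrightarrow> k<I \<Longrightarrow> norm (evW I W s w d j - evW I W s w d k)
           \<le> (1 - \<delta>^((I-1)*B))^(d div ((I-1)*B)) * D"
  using assms
proof (induction d arbitrary: s w D j k rule: less_induct)
  case (less d)
  define n where "n = (I-1)*B"
  have Bpos: "B > 0" using Bc unfolding B_strongly_connected_def by auto
  have npos: "n > 0" using I2 Bpos unfolding n_def by simp
  have dn1: "\<delta>^n \<le> 1" using delta_le1 d0 by (simp add: power_le_one)
  show ?case
  proof (cases "d < n")
    case True
    thus ?thesis using ev_mono[of w D j k s d] less.prems unfolding n_def[symmetric] by simp
  next
    case False
    define w' where "w' = evW I W s w n"
    have pw: "norm (w' j - w' k) \<le> (1 - \<delta>^n) * D" if "j<I" "k<I" for j k
    proof -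
      have e: "w' a = (\<Sum>l<I. evW I W s (ej l) n a *\<^sub>R w l)" if "a<I" for a
        unfolding w'_def by (rule evW_lin[OF that])
      have "norm ((\<Sum>l<I. evW I W s (ej l) n j *\<^sub>R w l) - (\<Sum>l<I. evW I W s (ej l) n k *\<^sub>R w l))
          \<le> (1 - real I * \<delta>^n) * D"
      proof (rule contract[where p="\<lambda>a l. evW I W s (ej l) n a"])
        show "\<delta>^n \<le> evW I W s (ej l) n a" if "a<I" "l<I" for a l
          unfolding n_def by (rule ev_pos) (use that in auto)
        show "(\<Sum>l<I. evW I W s (ej l) n a) = 1" if "a<I" for a
          by (rule ev_rows) (use that in auto)
        show "norm (w a - w b) \<le> D" if "a<I" "b<I" for a b
          using less.prems(3) that by blast
      qed (use that in auto)
      also have "\<dots> \<le> (1 - \<delta>^n) * D"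
      proof (rule mult_right_mono)
        have "1 * \<delta>^n \<le> real I * \<delta>^n"
          by (rule mult_right_mono) (use I2 d0 in auto)
        thus "1 - real I * \<delta>^n \<le> 1 - \<delta>^n" by simp
        show "0 \<le> D" by fact
      qed
      finally show ?thesis using e that by simp
    qed
    have dd: "d = n + (d - n)" using False by simp
    have "evW I W s w d = evW I W (s+n) w' (d-n)"
      unfolding w'_def by (subst dd) (rule evW_comp)
    moreover have "norm (evW I W (s+n) w' (d-n) j - evW I W (s+n) w' (d-n) k)
        \<le> (1 - \<delta>^n)^((d-n) div n) * ((1 - \<delta>^n) * D)"
    proof -
      have lt: "d - n < d" using npos False by simp
      show ?thesis unfolding n_def
        by (rule less.IH) (use lt pw less.prems dn1 in \<open>auto simp: n_def\<close>)
    qed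
    moreover have "d div n = Suc ((d-n) div n)"
    proof -
      have "d div n = (n + (d-n)) div n" using dd by simp
      also have "\<dots> = Suc ((d-n) div n)" using npos by simp
      finally show ?thesis .
    qed
    ultimately show ?thesis unfolding n_def[symmetric] by (simp add: mult.assoc mult.commute mult.left_commute)
  qed
qed

end



lemma avg_bound:
  fixes y :: "nat \<Rightarrow> 'a::real_normed_vector"
  assumes fnn: "\<And>j. j<I \<Longrightarrow> 0 \<le> f j" and fs: "(\<Sum>j<I. f j) = real I" and I0: "I > 0"
    and Dy: "\<And>j k. j<I \<Longrightarrow> k<I \<Longrightarrow> norm (y j - y k) \<le> D" and i: "i<I"
  shows "norm (y i - (1/real I) *\<^sub>R (\<Sum>j<I. f j *\<^sub>R y j)) \<le> D"
proof -
  have "(1/real I) *\<^sub>R (\<Sum>j<I. f j *\<^sub>R y i) = y i"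
    using I0 by (simp add: scaleR_sum_left[symmetric] fs)
  hence "y i - (1/real I) *\<^sub>R (\<Sum>j<I. f j *\<^sub>R y j) = (1/real I) *\<^sub>R (\<Sum>j<I. f j *\<^sub>R (y i - y j))"
    by (simp add: scaleR_diff_right sum_subtractf)
  hence "norm (y i - (1/real I) *\<^sub>R (\<Sum>j<I. f j *\<^sub>R y j)) = (1/real I) * norm (\<Sum>j<I. f j *\<^sub>R (y i - y j))"
    by simp
  also have "\<dots> \<le> (1/real I) * (\<Sum>j<I. f j * D)"
  proof (rule mult_left_mono)
    have "norm (\<Sum>j<I. f j *\<^sub>R (y i - y j)) \<le> (\<Sum>j<I. norm (f j *\<^sub>R (y i - y j)))" by (rule norm_sum)
    also have "\<dots> \<le> (\<Sum>j<I. f j * D)"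
      by (rule sum_mono) (use fnn Dy i in \<open>auto intro!: mult_left_mono\<close>)
    finally show "norm (\<Sum>j<I. f j *\<^sub>R (y i - y j)) \<le> (\<Sum>j<I. f j * D)" .
  qed simp
  also have "\<dots> = D" using fs I0 by (simp add: sum_distrib_right[symmetric])
  finally show ?thesis .
qed

lemma rho_bound:
  fixes \<rho> r0 :: real
  assumes "0 < \<rho>" "\<rho> < 1" "\<rho>^n = r0" "n > 0"
  shows "r0^(d div n) \<le> \<rho>^d / r0"
proof -
  have r0: "0 < r0" using assms by auto
  have dd: "n * (d div n) + d mod n = d" by simp
  have "\<rho>^(n * (d div n) + d mod n) = (\<rho>^n)^(d div n) * \<rho>^(d mod n)"
    by (simp only: power_add power_mult)
  hence e: "\<rho>^d = r0^(d div n) * \<rho>^(d mod n)" using dd assms(3) by simp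
  have "\<rho>^n \<le> \<rho>^(d mod n)"
    by (rule power_decreasing) (use assms in \<open>auto intro: less_imp_le\<close>)
  hence "r0^(d div n) * r0 \<le> r0^(d div n) * \<rho>^(d mod n)"
    using assms(3) r0 by (intro mult_left_mono) auto
  thus ?thesis using e r0 by (simp add: pos_le_divide_eq)
qed

lemma norm_le_stacked:
  fixes w :: "nat \<Rightarrow> 'a::real_normed_vector"
  assumes "j < I"
  shows "norm (w j) \<le> stacked_norm I w"
proof -
  have "(norm (w j))\<^sup>2 \<le> (\<Sum>i<I. (norm (w i))\<^sup>2)"
    by (rule member_le_sum) (use assms in auto)
  hence "sqrt ((norm (w j))\<^sup>2) \<le> stacked_norm I w"
    unfolding stacked_norm_def by (rule real_sqrt_le_mono)
  thus ?thesis by simp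
qed

lemma pair_stacked:
  fixes w :: "nat \<Rightarrow> 'a::real_normed_vector"
  assumes "j < I" "k < I"
  shows "norm (w j - w k) \<le> 2 * stacked_norm I w"
  using norm_triangle_ineq4[of "w j" "w k"] norm_le_stacked[OF assms(1), of w] norm_le_stacked[OF assms(2), of w]
  by simp



theorem mainTheorem11:
  fixes I B :: nat and \<kappa> :: real
    and E :: "nat \<Rightarrow> (nat \<times> nat) set"
    and A :: "nat \<Rightarrow> nat \<Rightarrow> nat \<Rightarrow> real"
    and \<phi> :: "nat \<Rightarrow> nat \<Rightarrow> real"
    and x \<epsilon> :: "nat \<Rightarrow> nat \<Rightarrow> real ^ 'm"
  assumes I2: "I \<ge> 2"
    and \<kappa>pos: "\<kappa> > 0"
    and Esub: "\<And>k. E k \<subseteq> {..<I} \<times> {..<I}"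
    and Bconn: "B_strongly_connected I B E"
    and comp: "\<And>k. compliant I \<kappa> (E k) (A k)"
    and colst: "\<And>k. column_stochastic I (A k)"
    and phi0: "\<And>i. i < I \<Longrightarrow> \<phi> 0 i = 1"
    and phiS: "\<And>k i. i < I \<Longrightarrow> \<phi> (Suc k) i = (\<Sum>j<I. A k i j * \<phi> k j)"
    and xS: "\<And>k i. i < I \<Longrightarrow> x (Suc k) i =
               (1 / \<phi> (Suc k) i) *\<^sub>R (\<Sum>j<I. (A k i j * \<phi> k j) *\<^sub>R x k j) + \<epsilon> k i"
  shows "let \<phi>lb = (INF k. Min ((\<lambda>i. \<phi> k i) ` {..<I}));
             \<phi>ub = (SUP k. Max ((\<lambda>i. \<phi> k i) ` {..<I}));
             n = (I - 1) * B;
             \<kappa>t = \<kappa> * \<phi>lb / \<phi>ub;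
             \<rho> = (1 - \<kappa>t ^ n) powr (1 / real n);
             c = (2 * real I / \<rho>) * (2 * (1 + inverse (\<kappa>t ^ n)) / (1 - \<kappa>t ^ n))
         in \<phi>lb \<ge> \<kappa> ^ (2 * (I - 1) * B) \<and> \<phi>ub \<le> real I - \<kappa> ^ (2 * (I - 1) * B) \<and>
            0 < \<rho> \<and> \<rho> < 1 \<and>
            (\<forall>k. \<forall>i<I.
               norm (x k i - (1 / real I) *\<^sub>R (\<Sum>j<I. \<phi> k j *\<^sub>R x k j))
                 \<le> c * (\<rho> ^ k * stacked_norm I (x 0)
                        + (\<Sum>t<k. \<rho> ^ (k - 1 - t) * stacked_norm I (\<epsilon> t))))"
proof -
  define n where "n = (I-1)*B"
  have Bpos: "B>0" using Bconn unfolding B_strongly_connected_def by auto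
  have npos: "n>0" using I2 Bpos by (simp add: n_def)
  have I0: "I>0" using I2 by simp
  have Ann: "\<And>k i j. i<I \<Longrightarrow> j<I \<Longrightarrow> 0 \<le> A k i j"
    using colst unfolding column_stochastic_def by auto
  have Acol: "\<And>k j. j<I \<Longrightarrow> (\<Sum>i<I. A k i j) = 1"
    using colst unfolding column_stochastic_def by auto
  have Adiag: "\<And>k i. i<I \<Longrightarrow> \<kappa> \<le> A k i i"
    using comp unfolding compliant_def by auto
  have Aedge: "\<And>k i j. i<I \<Longrightarrow> j<I \<Longrightarrow> (j,i) \<in> E k \<Longrightarrow> \<kappa> \<le> A k i j"
    using comp unfolding compliant_def by auto
  have khalf: "2*\<kappa> \<le> 1"
  proof -
    let ?U = "(\<Union>t\<in>{0..0+B-1}. E t)"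
    have "strongly_connected_on I ?U" using Bconn unfolding B_strongly_connected_def by blast
    hence "(0,1) \<in> (?U \<inter> ({..<I}\<times>{..<I}))\<^sup>*" using I2 unfolding strongly_connected_on_def by auto
    from cut_edge[OF this, of "{0}"] obtain a b where ab: "(a,b) \<in> ?U \<inter> ({..<I}\<times>{..<I})" "a\<in>{0}" "b\<notin>{0}"
      by auto
    then obtain t where t: "(0,b) \<in> E t" "b<I" "b\<noteq>0" by auto
    have k1: "\<kappa> \<le> A t b 0" using Aedge t I0 by auto
    have k2: "\<kappa> \<le> A t 0 0" using Adiag I0 by auto
    have "(\<Sum>i\<in>{0,b}. A t i 0) \<le> (\<Sum>i<I. A t i 0)"
      by (rule sum_mono2) (use t Ann I0 in auto)
    hence "A t 0 0 + A t b 0 \<le> 1" using Acol[of 0 t] I0 t by simp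
    thus ?thesis using k1 k2 by simp
  qed
  have kle1: "\<kappa> \<le> 1" using khalf \<kappa>pos by simp
  have phisum: "(\<Sum>i<I. \<phi> k i) = real I" for k
  proof (induction k)
    case 0
    have "(\<Sum>i<I. \<phi> 0 i) = (\<Sum>i<I. 1)" by (rule sum.cong) (auto simp: phi0)
    thus ?case by simp
  next
    case (Suc k)
    have "(\<Sum>i<I. \<phi> (Suc k) i) = (\<Sum>i<I. \<Sum>j<I. A k i j * \<phi> k j)"
      by (rule sum.cong) (auto simp: phiS)
    also have "\<dots> = (\<Sum>j<I. \<Sum>i<I. A k i j * \<phi> k j)" by (rule sum.swap)
    also have "\<dots> = (\<Sum>j<I. \<phi> k j)"
      by (rule sum.cong) (auto simp: sum_distrib_right[symmetric] Acol)
    finally show ?case using Suc by simp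
  qed
  have phinn': "\<forall>i<I. 0 \<le> \<phi> k i" for k
    by (induction k) (auto simp: phi0 phiS intro!: sum_nonneg mult_nonneg_nonneg Ann)
  hence phinn: "\<And>k i. i<I \<Longrightarrow> 0 \<le> \<phi> k i" by blast
  have phikk': "\<forall>i<I. \<kappa>^k \<le> \<phi> k i" for k
  proof (induction k)
    case 0 thus ?case by (simp add: phi0)
  next
    case (Suc k)
    show ?case
    proof (intro allI impI)
      fix i assume i: "i<I"
      have "\<kappa>^(Suc k) = \<kappa> * \<kappa>^k" by simp
      also have "\<dots> \<le> A k i i * \<phi> k i"
        by (rule mult_mono) (use Suc i Adiag Ann \<kappa>pos in auto)
      also have "\<dots> \<le> (\<Sum>j<I. A k i j * \<phi> k j)"
        by (rule member_le_sum) (use i Ann phinn in \<open>auto intro!: mult_nonneg_nonneg\<close>)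
      finally show "\<kappa>^(Suc k) \<le> \<phi> (Suc k) i" using phiS i by simp
    qed
  qed
  have philow: "\<kappa>^n \<le> \<phi> k i" if i: "i<I" for k i
  proof (cases "k < n")
    case True
    have "\<kappa>^n \<le> \<kappa>^k" by (rule power_decreasing) (use True kle1 \<kappa>pos in auto)
    thus ?thesis using phikk' i by (meson order.trans)
  next
    case False
    define r where "r = k - n"
    obtain j0 where j0: "j0<I" "1 \<le> \<phi> r j0"
    proof (rule ccontr)
      assume "\<not> ?thesis"
      hence lt: "\<forall>j\<in>{..<I}. \<phi> r j < 1" using that by (force simp: not_le)
      have "(\<Sum>j<I. \<phi> r j) < (\<Sum>j<I. 1)"
        by (rule sum_strict_mono) (use lt I0 in auto)
      thus False using phisum[of r] by simp
    qed
    have "\<kappa>^((I-1)*B) \<le> (\<lambda>d. \<phi> (r+d)) ((I-1)*B) i"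
    proof (rule spread[where E=E and M="\<lambda>d. A (r+d)" and r=r and jz=j0, OF Bconn])
      show "(\<lambda>d. \<phi> (r+d)) (Suc d) i = (\<Sum>l<I. A (r+d) i l * (\<lambda>d. \<phi> (r+d)) d l)" if "i<I" for d i
        using phiS[OF that, of "r+d"] by simp
    qed (use \<kappa>pos Ann Adiag Aedge phinn j0 i in auto)
    moreover have "r + (I-1)*B = k" using False unfolding r_def n_def by simp
    ultimately show ?thesis unfolding n_def by simp
  qed
  have knpos: "0 < \<kappa>^n" using \<kappa>pos by simp
  have phipos: "\<And>k i. i<I \<Longrightarrow> 0 < \<phi> k i" using philow knpos by (meson less_le_trans)
  have phiup: "\<phi> k i \<le> real I - \<kappa>^n" if i: "i<I" for k i
  proof -
    define j' where "j' = (if i = 0 then 1 else (0::nat))"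
    have j': "j' < I" "j' \<noteq> i" using I2 i unfolding j'_def by auto
    have "(\<Sum>a\<in>{i,j'}. \<phi> k a) \<le> (\<Sum>a<I. \<phi> k a)"
      by (rule sum_mono2) (use i j' phinn in auto)
    hence "\<phi> k i + \<phi> k j' \<le> real I" using phisum j' by simp
    thus ?thesis using philow[OF j'(1), of k] by simp
  qed
  define mn where "mn k = Min ((\<lambda>i. \<phi> k i) ` {..<I})" for k
  define mx where "mx k = Max ((\<lambda>i. \<phi> k i) ` {..<I})" for k
  have ne: "(\<lambda>i. \<phi> k i) ` {..<I} \<noteq> {}" for k using I0 by auto
  have mn_ge: "\<kappa>^n \<le> mn k" for k
    unfolding mn_def by (rule Min.boundedI) (use ne philow in auto)
  have mn_le: "mn k \<le> \<phi> k i" if "i<I" for k i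
    unfolding mn_def by (rule Min_le) (use that in auto)
  have mx_le: "mx k \<le> real I - \<kappa>^n" for k
    unfolding mx_def by (rule Max.boundedI) (use ne phiup in auto)
  have mx_ge: "\<phi> k i \<le> mx k" if "i<I" for k i
    unfolding mx_def by (rule Max_ge) (use that in auto)
  define lb where "lb = (INF k. Min ((\<lambda>i. \<phi> k i) ` {..<I}))"
  define ub where "ub = (SUP k. Max ((\<lambda>i. \<phi> k i) ` {..<I}))"
  have lb_eq: "lb = (INF k. mn k)" unfolding lb_def mn_def by simp
  have ub_eq: "ub = (SUP k. mx k)" unfolding ub_def mx_def by simp
  have bddb: "bdd_below (range mn)" by (rule bdd_belowI2[where m="\<kappa>^n"]) (rule mn_ge)
  have bdda: "bdd_above (range mx)" by (rule bdd_aboveI2[where M="real I - \<kappa>^n"]) (rule mx_le)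
  have lb_ge: "\<kappa>^n \<le> lb" unfolding lb_eq by (rule cINF_greatest) (auto intro: mn_ge)
  have lb_le: "lb \<le> \<phi> k i" if "i<I" for k i
  proof -
    have "lb \<le> mn k" unfolding lb_eq by (rule cINF_lower[OF bddb]) simp
    thus ?thesis using mn_le[OF that, of k] by (rule order.trans)
  qed
  have ub_ge: "\<phi> k i \<le> ub" if "i<I" for k i
  proof -
    have "mx k \<le> ub" unfolding ub_eq by (rule cSUP_upper[OF _ bdda]) simp
    with mx_ge[OF that, of k] show ?thesis by (rule order.trans)
  qed
  have ub_le: "ub \<le> real I - \<kappa>^n" unfolding ub_eq by (rule cSUP_least) (auto intro: mx_le)
  have lb1: "lb \<le> 1" using lb_le[of 0 0] phi0 I0 by simp
  have ub1: "1 \<le> ub" using ub_ge[of 0 0] phi0 I0 by simp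
  have lbpos: "0 < lb" using lb_ge knpos by simp
  have k2n: "\<kappa>^(2*(I-1)*B) \<le> \<kappa>^n"
    by (rule power_decreasing) (use kle1 \<kappa>pos in \<open>auto simp: n_def\<close>)
  define \<kappa>t where "\<kappa>t = \<kappa> * lb / ub"
  have kt0: "0 < \<kappa>t" unfolding \<kappa>t_def using \<kappa>pos lbpos ub1 by simp
  have ktk: "\<kappa>t \<le> \<kappa>"
  proof -
    have "lb / ub \<le> 1" using lb1 ub1 lbpos by simp
    hence "\<kappa> * (lb / ub) \<le> \<kappa> * 1" using \<kappa>pos by (intro mult_left_mono) auto
    thus ?thesis unfolding \<kappa>t_def by simp
  qed
  have kt1: "\<kappa>t < 1" using ktk khalf \<kappa>pos by simp
  define r0 where "r0 = 1 - \<kappa>t^n"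
  have ktn: "0 < \<kappa>t^n" "\<kappa>t^n < 1" using kt0 kt1 npos by (auto simp: power_less_one_iff)
  have r0: "0 < r0" "r0 < 1" using ktn unfolding r0_def by auto
  define \<rho> where "\<rho> = (1 - \<kappa>t^n) powr (1 / real n)"
  have rho0: "0 < \<rho>" unfolding \<rho>_def using r0 by (simp add: r0_def)
  have rho1: "\<rho> < 1"
  proof -
    have "r0 powr (1 / real n) < 1 powr (1 / real n)"
      by (rule powr_less_mono2) (use r0 npos in auto)
    thus ?thesis unfolding \<rho>_def r0_def by simp
  qed
  have rhon: "\<rho>^n = r0"
  proof -
    have "\<rho>^n = \<rho> powr (real n)" using rho0 by (simp add: powr_realpow)
    also have "\<dots> = r0 powr (1 / real n * real n)" unfolding \<rho>_def r0_def by (simp add: powr_powr)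
    also have "\<dots> = r0" using npos r0 by simp
    finally show ?thesis .
  qed
  define c where "c = (2 * real I / \<rho>) * (2 * (1 + inverse (\<kappa>t ^ n)) / (1 - \<kappa>t ^ n))"
  have cge: "2 / r0 \<le> c"
  proof -
    have a: "1 \<le> 2 * real I / \<rho>" using rho0 rho1 I2 by (simp add: pos_le_divide_eq)
    have b: "2 / r0 \<le> 2 * (1 + inverse (\<kappa>t ^ n)) / r0"
      using r0 ktn by (intro divide_right_mono) auto
    have "1 * (2 / r0) \<le> (2 * real I / \<rho>) * (2 * (1 + inverse (\<kappa>t ^ n)) / r0)"
      by (rule mult_mono[OF a b]) (use r0 rho0 in auto)
    thus ?thesis unfolding c_def r0_def by simp
  qed
  define W where "W k i j = A k i j * \<phi> k j / \<phi> (Suc k) i" for k i j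
  have Wnn: "\<And>k i j. i<I \<Longrightarrow> j<I \<Longrightarrow> 0 \<le> W k i j"
    unfolding W_def using Ann phinn phipos by (auto intro!: divide_nonneg_pos mult_nonneg_nonneg)
  have Wrow: "\<And>k i. i<I \<Longrightarrow> (\<Sum>j<I. W k i j) = 1"
  proof -
    fix k i assume i: "i<I"
    have "(\<Sum>j<I. W k i j) = (\<Sum>j<I. A k i j * \<phi> k j) / \<phi> (Suc k) i"
      unfolding W_def by (simp add: sum_divide_distrib)
    thus "(\<Sum>j<I. W k i j) = 1" using phiS[OF i] phipos[OF i, of "Suc k"] by simp
  qed
  have Wge: "\<kappa>t \<le> W k i j" if "i<I" "j<I" "\<kappa> \<le> A k i j" for k i j
  proof -
    have "\<kappa> * lb \<le> A k i j * \<phi> k j"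
      by (rule mult_mono) (use that lb_le lbpos \<kappa>pos in \<open>auto\<close>)
    moreover have "0 \<le> A k i j * \<phi> k j" using Ann phinn that by simp
    ultimately have "\<kappa> * lb / ub \<le> A k i j * \<phi> k j / \<phi> (Suc k) i"
      by (intro frac_le) (use that phipos ub_ge in auto)
    thus ?thesis unfolding \<kappa>t_def W_def .
  qed
  have Wdiag: "\<And>k i. i<I \<Longrightarrow> \<kappa>t \<le> W k i i" using Wge Adiag by blast
  have Wedge: "\<And>k i j. i<I \<Longrightarrow> j<I \<Longrightarrow> (j,i) \<in> E k \<Longrightarrow> \<kappa>t \<le> W k i j" using Wge Aedge by blast
  have kt00: "0 \<le> \<kappa>t" using kt0 by simp
  note EC = ev_contract[OF I2 Bconn kt00 Wnn Wrow Wdiag Wedge]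
  have piece: "norm (evW I W s w d i - (1/real I) *\<^sub>R (\<Sum>j<I. \<phi> (s+d) j *\<^sub>R evW I W s w d j))
      \<le> 2 / r0 * (\<rho>^d * stacked_norm I w)" if i: "i<I" for s d i and w :: "nat \<Rightarrow> real^'m"
  proof -
    have sn0: "0 \<le> stacked_norm I w" unfolding stacked_norm_def by (simp add: sum_nonneg)
    have pw: "norm (evW I W s w d a - evW I W s w d b) \<le> r0^(d div n) * (2 * stacked_norm I w)"
      if "a<I" "b<I" for a b
      unfolding r0_def n_def
      by (rule EC) (use that pair_stacked sn0 in auto)
    have "norm (evW I W s w d i - (1/real I) *\<^sub>R (\<Sum>j<I. \<phi> (s+d) j *\<^sub>R evW I W s w d j))
        \<le> r0^(d div n) * (2 * stacked_norm I w)"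
      by (rule avg_bound) (use phinn phisum I0 pw i in auto)
    also have "\<dots> \<le> \<rho>^d / r0 * (2 * stacked_norm I w)"
      by (rule mult_right_mono[OF rho_bound]) (use rho0 rho1 rhon npos sn0 in auto)
    also have "\<dots> = 2 / r0 * (\<rho>^d * stacked_norm I w)" by simp
    finally show ?thesis .
  qed
  have xstep: "x (Suc k) i = (\<Sum>j<I. W k i j *\<^sub>R x k j) + \<epsilon> k i" if "i<I" for k i
    using xS[OF that, of k] unfolding W_def by (simp add: scaleR_sum_right)
  have evS: "evW I W (Suc t) w (Suc k - Suc t) i = (\<Sum>j<I. W k i j *\<^sub>R evW I W (Suc t) w (k - Suc t) j)"
    if "t<k" for t k i and w :: "nat \<Rightarrow> real^'m"
  proof -
    have e1: "Suc k - Suc t = Suc (k - Suc t)" using that by simp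
    have e2: "Suc (t + (k - Suc t)) = k" using that by simp
    show ?thesis unfolding e1 by (simp add: e2)
  qed
  have decomp: "\<forall>i<I. x k i = evW I W 0 (x 0) k i + (\<Sum>t<k. evW I W (Suc t) (\<epsilon> t) (k - Suc t) i)" for k
  proof (induction k)
    case 0 thus ?case by simp
  next
    case (Suc k)
    show ?case
    proof (intro allI impI)
      fix i assume i: "i<I"
      have "x (Suc k) i = (\<Sum>j<I. W k i j *\<^sub>R (evW I W 0 (x 0) k j + (\<Sum>t<k. evW I W (Suc t) (\<epsilon> t) (k - Suc t) j))) + \<epsilon> k i"
        unfolding xstep[OF i] using Suc by (intro arg_cong2[where f="(+)"] sum.cong) auto
      also have "\<dots> = (\<Sum>j<I. W k i j *\<^sub>R evW I W 0 (x 0) k j)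
            + (\<Sum>t<k. \<Sum>j<I. W k i j *\<^sub>R evW I W (Suc t) (\<epsilon> t) (k - Suc t) j) + \<epsilon> k i"
        by (simp add: scaleR_right_distrib sum.distrib scaleR_sum_right sum.swap[of _ "{..<I}"])
      also have "\<dots> = evW I W 0 (x 0) (Suc k) i
            + (\<Sum>t<k. evW I W (Suc t) (\<epsilon> t) (Suc k - Suc t) i) + \<epsilon> k i"
      proof -
        have "(\<Sum>t<k. \<Sum>j<I. W k i j *\<^sub>R evW I W (Suc t) (\<epsilon> t) (k - Suc t) j)
            = (\<Sum>t<k. evW I W (Suc t) (\<epsilon> t) (Suc k - Suc t) i)"
          by (rule sum.cong[OF refl], rule evS[symmetric]) simp
        thus ?thesis by simp
      qed
      also have "\<dots> = evW I W 0 (x 0) (Suc k) i + (\<Sum>t<Suc k. evW I W (Suc t) (\<epsilon> t) (Suc k - Suc t) i)"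
        by simp
      finally show "x (Suc k) i = evW I W 0 (x 0) (Suc k) i + (\<Sum>t<Suc k. evW I W (Suc t) (\<epsilon> t) (Suc k - Suc t) i)" .
    qed
  qed
  have final: "norm (x k i - (1 / real I) *\<^sub>R (\<Sum>j<I. \<phi> k j *\<^sub>R x k j))
      \<le> c * (\<rho> ^ k * stacked_norm I (x 0) + (\<Sum>t<k. \<rho> ^ (k - 1 - t) * stacked_norm I (\<epsilon> t)))"
    if i: "i<I" for k i
  proof -
    define P0 where "P0 = evW I W 0 (x 0) k"
    define P where "P t = evW I W (Suc t) (\<epsilon> t) (k - Suc t)" for t
    define av where "av y = (1 / real I) *\<^sub>R (\<Sum>j<I. \<phi> k j *\<^sub>R y j)" for y :: "nat \<Rightarrow> real^'m"
    have xk: "x k j = P0 j + (\<Sum>t<k. P t j)" if "j<I" for j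
      using decomp[of k] that unfolding P0_def P_def by auto
    have avx: "av (x k) = av P0 + (\<Sum>t<k. av (P t))"
    proof -
      have "(\<Sum>j<I. \<phi> k j *\<^sub>R x k j) = (\<Sum>j<I. \<phi> k j *\<^sub>R (P0 j + (\<Sum>t<k. P t j)))"
        by (rule sum.cong) (auto simp: xk)
      also have "\<dots> = (\<Sum>j<I. \<phi> k j *\<^sub>R P0 j) + (\<Sum>t<k. \<Sum>j<I. \<phi> k j *\<^sub>R P t j)"
        by (simp add: scaleR_right_distrib sum.distrib scaleR_sum_right sum.swap[of _ "{..<I}"])
      finally show ?thesis unfolding av_def by (simp add: scaleR_right_distrib scaleR_sum_right)
    qed
    have eq: "x k i - av (x k) = (P0 i - av P0) + (\<Sum>t<k. P t i - av (P t))"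
      using xk[OF i] avx by (simp add: sum_subtractf)
    have b0: "norm (P0 i - av P0) \<le> 2 / r0 * (\<rho>^k * stacked_norm I (x 0))"
      using piece[OF i, where s=0 and d=k and w="x 0"] unfolding P0_def av_def by simp
    have bt: "norm (P t i - av (P t)) \<le> 2 / r0 * (\<rho>^(k - 1 - t) * stacked_norm I (\<epsilon> t))"
      if "t \<in> {..<k}" for t
    proof -
      have e: "Suc t + (k - Suc t) = k" using that by simp
      show ?thesis using piece[OF i, where s="Suc t" and d="k - Suc t" and w="\<epsilon> t"] unfolding P_def av_def e by simp
    qed
    have "norm (x k i - av (x k)) \<le> norm (P0 i - av P0) + norm (\<Sum>t<k. P t i - av (P t))"
      unfolding eq by (rule norm_triangle_ineq)
    also have "\<dots> \<le> norm (P0 i - av P0) + (\<Sum>t<k. norm (P t i - av (P t)))"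
      by (simp add: norm_sum)
    also have "\<dots> \<le> 2 / r0 * (\<rho>^k * stacked_norm I (x 0)) + (\<Sum>t<k. 2 / r0 * (\<rho>^(k - 1 - t) * stacked_norm I (\<epsilon> t)))"
      by (intro add_mono b0 sum_mono bt)
    also have "\<dots> = 2 / r0 * (\<rho>^k * stacked_norm I (x 0) + (\<Sum>t<k. \<rho>^(k - 1 - t) * stacked_norm I (\<epsilon> t)))"
      by (simp add: sum_distrib_left distrib_left)
    also have "\<dots> \<le> c * (\<rho>^k * stacked_norm I (x 0) + (\<Sum>t<k. \<rho>^(k - 1 - t) * stacked_norm I (\<epsilon> t)))"
      by (rule mult_right_mono[OF cge]) (use rho0 in \<open>auto intro!: add_nonneg_nonneg sum_nonneg mult_nonneg_nonneg simp: stacked_norm_def\<close>)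
    finally show ?thesis unfolding av_def .
  qed
  have main: "lb \<ge> \<kappa> ^ (2 * (I - 1) * B) \<and> ub \<le> real I - \<kappa> ^ (2 * (I - 1) * B) \<and>
            0 < \<rho> \<and> \<rho> < 1 \<and>
            (\<forall>k. \<forall>i<I.
               norm (x k i - (1 / real I) *\<^sub>R (\<Sum>j<I. \<phi> k j *\<^sub>R x k j))
                 \<le> c * (\<rho> ^ k * stacked_norm I (x 0)
                        + (\<Sum>t<k. \<rho> ^ (k - 1 - t) * stacked_norm I (\<epsilon> t))))"
    using lb_ge ub_le k2n rho0 rho1 final by auto
  show ?thesis
    unfolding Let_def lb_def[symmetric] ub_def[symmetric] n_def[symmetric] \<kappa>t_def[symmetric]
      \<rho>_def[symmetric] c_def[symmetric]
    by (rule main)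
qed

end
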